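(* Let $W$ be a string C-group, $\mathcal{P}(W)$ the regular abstract polytope with automorphism group $W$, and $N\le W$ a subgroup such that $\mathcal{P}(W)/N$ is a polytope on which $W$ acts via the flag action. Let $\mathrm{Core}(W,N)=\bigcap_{w\in W}N^{w}$. Suppose that $\mathcal{P}(W/\mathrm{Core}(W,N))$ is a well-defined regular polytope. Let $\mathcal{R}$ be any other regular cover of $\mathcal{P}(W)/N$ whose automorphism group acts on $\mathcal{P}(W)/N$ via the flag action, and on which $W$ acts likewise (so that $\mathcal{R}=\mathcal{P}(W)/K=\mathcal{P}(W/K)$ for a normal subgroup $K$ of $W$). Then $\mathcal{R}$ also covers $\mathcal{P}(W/\mathrm{Core}(W,N))$.
   Context: An abstract polytope is a graded poset with least and greatest faces, all flags (maximal chains) of the same length, strongly connected, and satisfying the diamond condition. A string C-group is a group generated by distinct involutions $s_0,\dots,s_{n-1}$ with $(s_is_j)^2=1$ for $|i-j|>1$ and satisfying the intersection property $\langle s_i:i\in I\rangle\cap\langle s_j:j\in J\rangle=\langle s_i:i\in I\cap J\rangle$; regular polytopes correspond bijectively to string C-groups, $\mathcal{P}(W)$ denoting the regular polytope with automorphism group $W$. For a polytope $\mathcal{Q}$, the flag action of $W$ sends a flag $\Phi$ under $s_i$ to the unique flag $\Phi^{s_i}$ differing from $\Phi$ only in its face of rank $i$, when this extends to a well-defined action of $W$ on the flags. For $N\le W$, $\mathcal{P}(W)/N$ denotes the quotient of $\mathcal{P}(W)$ by $N$; a polytope on which $W$ acts by the flag action is isomorphic to $\mathcal{P}(W)/N$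 where $N$ is the stabilizer of a base flag. $N^w=w^{-1}Nw$. *)

theory Defs
  imports "HOL-Algebra.Generated_Groups"
begin

definition partial_order_on_set :: "'a set \<Rightarrow> ('a \<Rightarrow> 'a \<Rightarrow> bool) \<Rightarrow> bool" where
  "partial_order_on_set F lq \<longleftrightarrow>
     (\<forall>x\<in>F. lq x x) \<and>
     (\<forall>x\<in>F. \<forall>y\<in>F. lq x y \<and> lq y x \<longrightarrow> x = y) \<and>
     (\<forall>x\<in>F. \<forall>y\<in>F. \<forall>z\<in>F. lq x y \<and> lq y z \<longrightarrow> lq x z)"

definition is_flag :: "'a set \<Rightarrow> ('a \<Rightarrow> 'a \<Rightarrow> bool) \<Rightarrow> 'a set \<Rightarrow> bool" where
  "is_flag F lq \<Phi> \<longleftrightarrow>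
     \<Phi> \<subseteq> F \<and>
     (\<forall>x\<in>\<Phi>. \<forall>y\<in>\<Phi>. lq x y \<or> lq y x) \<and>
     (\<forall>x\<in>F. (\<forall>y\<in>\<Phi>. lq x y \<or> lq y x) \<longrightarrow> x \<in> \<Phi>)"

definition proper_in_section ::
  "'a set \<Rightarrow> ('a \<Rightarrow> 'a \<Rightarrow> bool) \<Rightarrow> 'a \<Rightarrow> 'a \<Rightarrow> 'a \<Rightarrow> bool" where
  "proper_in_section F lq x y u \<longleftrightarrow> u \<in> F \<and> lq x u \<and> lq u y \<and> u \<noteq> x \<and> u \<noteq> y"

definition section_connected ::
  "'a set \<Rightarrow> ('a \<Rightarrow> 'a \<Rightarrow> bool) \<Rightarrow> ('a \<Rightarrow> int) \<Rightarrow> 'a \<Rightarrow> 'a \<Rightarrow> bool" where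
  "section_connected F lq rk x y \<longleftrightarrow>
     rk y - rk x - 1 \<le> 1 \<or>
     (\<forall>u v. proper_in_section F lq x y u \<and> proper_in_section F lq x y v \<longrightarrow>
        (\<exists>ps. ps \<noteq> [] \<and> hd ps = u \<and> last ps = v \<and>
              (\<forall>p\<in>set ps. proper_in_section F lq x y p) \<and>
              (\<forall>k. Suc k < length ps \<longrightarrow>
                    lq (ps ! k) (ps ! Suc k) \<or> lq (ps ! Suc k) (ps ! k))))"

definition polytope :: "'a set \<Rightarrow> ('a \<Rightarrow> 'a \<Rightarrow> bool) \<Rightarrow> ('a \<Rightarrow> int) \<Rightarrow> nat \<Rightarrow> bool" where
  "polytope F lq rk n \<longleftrightarrow>
     partial_order_on_set F lq \<and>
     (\<exists>b\<in>F. \<forall>x\<in>F. lq b x) \<and>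
     (\<exists>t\<in>F. \<forall>x\<in>F. lq x t) \<and>
     (\<forall>x\<in>F. -1 \<le> rk x \<and> rk x \<le> int n) \<and>
     (\<forall>x\<in>F. \<forall>y\<in>F. lq x y \<and> x \<noteq> y \<longrightarrow> rk x < rk y) \<and>
     (\<forall>\<Phi>. is_flag F lq \<Phi> \<longrightarrow> (\<forall>i. -1 \<le> i \<and> i \<le> int n \<longrightarrow> (\<exists>!x. x \<in> \<Phi> \<and> rk x = i))) \<and>
     (\<forall>x\<in>F. \<forall>y\<in>F. lq x y \<and> rk y = rk x + 2 \<longrightarrow>
        card {z\<in>F. lq x z \<and> lq z y \<and> z \<noteq> x \<and> z \<noteq> y} = 2) \<and>
     (\<forall>x\<in>F. \<forall>y\<in>F. lq x y \<longrightarrow> section_connected F lq rk x y)"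

definition i_adjacent ::
  "'a set \<Rightarrow> ('a \<Rightarrow> 'a \<Rightarrow> bool) \<Rightarrow> ('a \<Rightarrow> int) \<Rightarrow> nat \<Rightarrow> 'a set \<Rightarrow> 'a set \<Rightarrow> bool" where
  "i_adjacent F lq rk i \<Phi> \<Psi> \<longleftrightarrow>
     is_flag F lq \<Phi> \<and> is_flag F lq \<Psi> \<and> \<Phi> \<noteq> \<Psi> \<and>
     (\<forall>x\<in>\<Phi>. rk x \<noteq> int i \<longrightarrow> x \<in> \<Psi>)"

definition polytope_automorphism ::
  "'a set \<Rightarrow> ('a \<Rightarrow> 'a \<Rightarrow> bool) \<Rightarrow> ('a \<Rightarrow> 'a) \<Rightarrow> bool" where
  "polytope_automorphism F lq \<alpha> \<longleftrightarrow>
     bij_betw \<alpha> F F \<and> (\<forall>x\<in>F. \<forall>y\<in>F. lq x y \<longleftrightarrow> lq (\<alpha> x) (\<alpha> y))"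

definition regular_polytope :: "'a set \<Rightarrow> ('a \<Rightarrow> 'a \<Rightarrow> bool) \<Rightarrow> ('a \<Rightarrow> int) \<Rightarrow> nat \<Rightarrow> bool" where
  "regular_polytope F lq rk n \<longleftrightarrow>
     polytope F lq rk n \<and>
     (\<forall>\<Phi> \<Psi>. is_flag F lq \<Phi> \<and> is_flag F lq \<Psi> \<longrightarrow>
        (\<exists>\<alpha>. polytope_automorphism F lq \<alpha> \<and> \<alpha> ` \<Phi> = \<Psi>))"

definition covering ::
  "'a set \<Rightarrow> ('a \<Rightarrow> 'a \<Rightarrow> bool) \<Rightarrow> ('a \<Rightarrow> int) \<Rightarrow>
   'b set \<Rightarrow> ('b \<Rightarrow> 'b \<Rightarrow> bool) \<Rightarrow> ('b \<Rightarrow> int) \<Rightarrow> nat \<Rightarrow> ('a \<Rightarrow> 'b) \<Rightarrow> bool" where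
  "covering F lq rk F' lq' rk' n \<gamma> \<longleftrightarrow>
     \<gamma> ` F = F' \<and>
     (\<forall>x\<in>F. rk' (\<gamma> x) = rk x) \<and>
     (\<forall>x\<in>F. \<forall>y\<in>F. lq x y \<longrightarrow> lq' (\<gamma> x) (\<gamma> y)) \<and>
     (\<forall>\<Phi>. is_flag F lq \<Phi> \<longrightarrow> is_flag F' lq' (\<gamma> ` \<Phi>)) \<and>
     (\<forall>i<n. \<forall>\<Phi> \<Psi>. i_adjacent F lq rk i \<Phi> \<Psi> \<longrightarrow>
        i_adjacent F' lq' rk' i (\<gamma> ` \<Phi>) (\<gamma> ` \<Psi>))"

definition covers ::
  "'a set \<Rightarrow> ('a \<Rightarrow> 'a \<Rightarrow> bool) \<Rightarrow> ('a \<Rightarrow> int) \<Rightarrow>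
   'b set \<Rightarrow> ('b \<Rightarrow> 'b \<Rightarrow> bool) \<Rightarrow> ('b \<Rightarrow> int) \<Rightarrow> nat \<Rightarrow> bool" where
  "covers F lq rk F' lq' rk' n \<longleftrightarrow> (\<exists>\<gamma>. covering F lq rk F' lq' rk' n \<gamma>)"

definition string_C_group :: "('g, 'm) monoid_scheme \<Rightarrow> (nat \<Rightarrow> 'g) \<Rightarrow> nat \<Rightarrow> bool" where
  "string_C_group G s n \<longleftrightarrow>
     group G \<and>
     (\<forall>i<n. s i \<in> carrier G \<and> s i \<noteq> \<one>\<^bsub>G\<^esub> \<and> s i \<otimes>\<^bsub>G\<^esub> s i = \<one>\<^bsub>G\<^esub>) \<and>
     inj_on s {..<n} \<and>
     generate G (s ` {..<n}) = carrier G \<and>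
     (\<forall>i<n. \<forall>j<n. (i + 1 < j \<or> j + 1 < i) \<longrightarrow>
        (s i \<otimes>\<^bsub>G\<^esub> s j) \<otimes>\<^bsub>G\<^esub> (s i \<otimes>\<^bsub>G\<^esub> s j) = \<one>\<^bsub>G\<^esub>) \<and>
     (\<forall>I J. I \<subseteq> {..<n} \<and> J \<subseteq> {..<n} \<longrightarrow>
        generate G (s ` I) \<inter> generate G (s ` J) = generate G (s ` (I \<inter> J)))"

text \<open>W acts (on the right) on the flags of the polytope via the flag action:
  the generator s i sends a flag to its i-adjacent flag.\<close>
definition flag_action ::
  "('g, 'm) monoid_scheme \<Rightarrow> (nat \<Rightarrow> 'g) \<Rightarrow> nat \<Rightarrow>
   'a set \<Rightarrow> ('a \<Rightarrow> 'a \<Rightarrow> bool) \<Rightarrow> ('a \<Rightarrow> int) \<Rightarrow> ('g \<Rightarrow> 'a set \<Rightarrow> 'a set) \<Rightarrow> bool" where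
  "flag_action G s n F lq rk act \<longleftrightarrow>
     (\<forall>g\<in>carrier G. \<forall>\<Phi>. is_flag F lq \<Phi> \<longrightarrow> is_flag F lq (act g \<Phi>)) \<and>
     (\<forall>\<Phi>. is_flag F lq \<Phi> \<longrightarrow> act \<one>\<^bsub>G\<^esub> \<Phi> = \<Phi>) \<and>
     (\<forall>g\<in>carrier G. \<forall>h\<in>carrier G. \<forall>\<Phi>. is_flag F lq \<Phi> \<longrightarrow>
        act (g \<otimes>\<^bsub>G\<^esub> h) \<Phi> = act h (act g \<Phi>)) \<and>
     (\<forall>i<n. \<forall>\<Phi>. is_flag F lq \<Phi> \<longrightarrow> i_adjacent F lq rk i \<Phi> (act (s i) \<Phi>))"

definition flag_stabilizer ::
  "('g, 'm) monoid_scheme \<Rightarrow> ('g \<Rightarrow> 'a set \<Rightarrow> 'a set) \<Rightarrow> 'a set \<Rightarrow> 'g set" where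
  "flag_stabilizer G act \<Phi> = {g \<in> carrier G. act g \<Phi> = \<Phi>}"

definition core :: "('g, 'm) monoid_scheme \<Rightarrow> 'g set \<Rightarrow> 'g set" where
  "core G N = (\<Inter>w\<in>carrier G. {inv\<^bsub>G\<^esub> w \<otimes>\<^bsub>G\<^esub> x \<otimes>\<^bsub>G\<^esub> w | x. x \<in> N})"

end

theory Submission
  imports Defs
begin


locale ptope =
  fixes F :: "'a set" and lq :: "'a \<Rightarrow> 'a \<Rightarrow> bool" and rk :: "'a \<Rightarrow> int" and n :: nat
  assumes P: "polytope F lq rk n"
begin

lemma PO: "partial_order_on_set F lq" using P unfolding polytope_def by (elim conjE) assumption
lemma Pbot: "\<exists>b\<in>F. \<forall>x\<in>F. lq b x" using P unfolding polytope_def by (elim conjE) assumption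
lemma Ptop: "\<exists>t\<in>F. \<forall>x\<in>F. lq x t" using P unfolding polytope_def by (elim conjE) assumption
lemma Prk: "\<forall>x\<in>F. -1 \<le> rk x \<and> rk x \<le> int n" using P unfolding polytope_def by (elim conjE) assumption
lemma Pmono: "\<forall>x\<in>F. \<forall>y\<in>F. lq x y \<and> x \<noteq> y \<longrightarrow> rk x < rk y"
  using P unfolding polytope_def by (elim conjE) assumption
lemma Pflag: "\<forall>\<Phi>. is_flag F lq \<Phi> \<longrightarrow> (\<forall>i. -1 \<le> i \<and> i \<le> int n \<longrightarrow> (\<exists>!x. x \<in> \<Phi> \<and> rk x = i))"
  using P unfolding polytope_def by (elim conjE) assumption
lemma Pdiam: "\<forall>x\<in>F. \<forall>y\<in>F. lq x y \<and> rk y = rk x + 2 \<longrightarrow>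
        card {z\<in>F. lq x z \<and> lq z y \<and> z \<noteq> x \<and> z \<noteq> y} = 2"
  using P unfolding polytope_def by (elim conjE) assumption
lemma Pconn: "\<forall>x\<in>F. \<forall>y\<in>F. lq x y \<longrightarrow> section_connected F lq rk x y"
  using P unfolding polytope_def by (elim conjE) assumption

lemma refl: "x \<in> F \<Longrightarrow> lq x x"
  using PO unfolding partial_order_on_set_def by (elim conjE) blast
lemma antisym: "x \<in> F \<Longrightarrow> y \<in> F \<Longrightarrow> lq x y \<Longrightarrow> lq y x \<Longrightarrow> x = y"
  using PO unfolding partial_order_on_set_def by (elim conjE) blast
lemma trans: "x \<in> F \<Longrightarrow> y \<in> F \<Longrightarrow> z \<in> F \<Longrightarrow> lq x y \<Longrightarrow> lq y z \<Longrightarrow> lq x z"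
  using PO unfolding partial_order_on_set_def by (elim conjE) blast
lemma rk_range: "x \<in> F \<Longrightarrow> -1 \<le> rk x \<and> rk x \<le> int n"
  using Prk by blast
lemma rk_mono: "x \<in> F \<Longrightarrow> y \<in> F \<Longrightarrow> lq x y \<Longrightarrow> x \<noteq> y \<Longrightarrow> rk x < rk y"
  using Pmono by blast
lemma rk_le: "x \<in> F \<Longrightarrow> y \<in> F \<Longrightarrow> lq x y \<Longrightarrow> rk x \<le> rk y"
  using rk_mono by fastforce
lemma flag_rank: "is_flag F lq \<Phi> \<Longrightarrow> -1 \<le> i \<Longrightarrow> i \<le> int n \<Longrightarrow> \<exists>!x. x \<in> \<Phi> \<and> rk x = i"
  using Pflag by blast
lemma diamond: "x \<in> F \<Longrightarrow> y \<in> F \<Longrightarrow> lq x y \<Longrightarrow> rk y = rk x + 2 \<Longrightarrow>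
        card {z\<in>F. lq x z \<and> lq z y \<and> z \<noteq> x \<and> z \<noteq> y} = 2"
  using Pdiam by blast
lemma sconn: "x \<in> F \<Longrightarrow> y \<in> F \<Longrightarrow> lq x y \<Longrightarrow> section_connected F lq rk x y"
  using Pconn by blast

lemma flag_sub: "is_flag F lq \<Phi> \<Longrightarrow> \<Phi> \<subseteq> F" unfolding is_flag_def by blast
lemma flag_cmp: "is_flag F lq \<Phi> \<Longrightarrow> x \<in> \<Phi> \<Longrightarrow> y \<in> \<Phi> \<Longrightarrow> lq x y \<or> lq y x"
  unfolding is_flag_def by blast
lemma flag_max: "is_flag F lq \<Phi> \<Longrightarrow> x \<in> F \<Longrightarrow> (\<forall>y\<in>\<Phi>. lq x y \<or> lq y x) \<Longrightarrow> x \<in> \<Phi>"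
  unfolding is_flag_def by blast

lemma flag_inj: assumes "is_flag F lq \<Phi>" "x \<in> \<Phi>" "y \<in> \<Phi>" "rk x = rk y" shows "x = y"
proof (rule ccontr)
  assume ne: "x \<noteq> y"
  have c: "lq x y \<or> lq y x" by (rule flag_cmp[OF assms(1-3)])
  have xF: "x \<in> F" "y \<in> F" using flag_sub[OF assms(1)] assms(2,3) by auto
  show False using c rk_mono[OF xF(1) xF(2)] rk_mono[OF xF(2) xF(1)] ne assms(4) by auto
qed

lemma flag_le: assumes "is_flag F lq \<Phi>" "x \<in> \<Phi>" "y \<in> \<Phi>" "rk x \<le> rk y" shows "lq x y"
proof -
  have c: "lq x y \<or> lq y x" by (rule flag_cmp[OF assms(1-3)])
  have xF: "x \<in> F" "y \<in> F" using flag_sub[OF assms(1)] assms(2,3) by auto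
  show ?thesis
  proof (cases "x = y")
    case True then show ?thesis using refl xF by simp
  next
    case False then show ?thesis using c rk_mono[OF xF(2) xF(1)] assms(4) by auto
  qed
qed

lemma flag_eq: assumes "is_flag F lq \<Phi>" "is_flag F lq \<Psi>" "\<Phi> \<subseteq> \<Psi>" shows "\<Phi> = \<Psi>"
proof -
  have "\<Psi> \<subseteq> \<Phi>"
  proof
    fix y assume y: "y \<in> \<Psi>"
    have "y \<in> F" using flag_sub[OF assms(2)] y by auto
    moreover have "\<forall>x\<in>\<Phi>. lq y x \<or> lq x y" using flag_cmp[OF assms(2) y] assms(3) by blast
    ultimately show "y \<in> \<Phi>" using flag_max[OF assms(1)] by blast
  qed
  then show ?thesis using assms(3) by blast
qed

lemma extend: assumes "C \<subseteq> F" "\<forall>x\<in>C. \<forall>y\<in>C. lq x y \<or> lq y x"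
  shows "\<exists>\<Phi>. is_flag F lq \<Phi> \<and> C \<subseteq> \<Phi>"
proof -
  define A where "A = {D. C \<subseteq> D \<and> D \<subseteq> F \<and> (\<forall>x\<in>D. \<forall>y\<in>D. lq x y \<or> lq y x)}"
  have CA: "C \<in> A" using assms unfolding A_def by blast
  have "\<forall>Ch\<in>chains A. \<exists>U\<in>A. \<forall>X\<in>Ch. X \<subseteq> U"
  proof
    fix Ch assume ch: "Ch \<in> chains A"
    have sub: "Ch \<subseteq> A" and lin: "\<And>X Y. X \<in> Ch \<Longrightarrow> Y \<in> Ch \<Longrightarrow> X \<subseteq> Y \<or> Y \<subseteq> X"
      using ch unfolding chains_def chain_subset_def by auto
    show "\<exists>U\<in>A. \<forall>X\<in>Ch. X \<subseteq> U"
    proof (cases "Ch = {}")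
      case True then show ?thesis using CA by blast
    next
      case False
      then obtain X0 where X0: "X0 \<in> Ch" by blast
      have c1: "C \<subseteq> \<Union>Ch" using X0 sub unfolding A_def by blast
      have c2: "\<Union>Ch \<subseteq> F" using sub unfolding A_def by blast
      have c3: "\<forall>x\<in>\<Union>Ch. \<forall>y\<in>\<Union>Ch. lq x y \<or> lq y x"
      proof (intro ballI)
        fix x y assume "x \<in> \<Union>Ch" "y \<in> \<Union>Ch"
        then obtain X Y where XY: "X \<in> Ch" "Y \<in> Ch" "x \<in> X" "y \<in> Y" by blast
        have "X \<subseteq> Y \<or> Y \<subseteq> X" using lin XY(1,2) .
        moreover have "X \<in> A" "Y \<in> A" using sub XY by auto
        ultimately show "lq x y \<or> lq y x" using XY(3,4) unfolding A_def by blast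
      qed
      have "\<Union>Ch \<in> A" using c1 c2 c3 unfolding A_def by blast
      then show ?thesis by blast
    qed
  qed
  from Zorn_Lemma2[OF this] obtain M where M: "M \<in> A" "\<forall>X\<in>A. M \<subseteq> X \<longrightarrow> X = M" by blast
  have MA: "C \<subseteq> M" "M \<subseteq> F" "\<forall>x\<in>M. \<forall>y\<in>M. lq x y \<or> lq y x" using M(1) unfolding A_def by auto
  have "is_flag F lq M"
    unfolding is_flag_def
  proof (intro conjI ballI impI)
    show "M \<subseteq> F" using MA by blast
    show "\<And>x y. x \<in> M \<Longrightarrow> y \<in> M \<Longrightarrow> lq x y \<or> lq y x" using MA by blast
    fix x assume x: "x \<in> F" "\<forall>y\<in>M. lq x y \<or> lq y x"
    have "insert x M \<in> A" using MA x refl unfolding A_def by auto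
    then have "insert x M = M" using M(2) by blast
    then show "x \<in> M" by blast
  qed
  then show ?thesis using MA by blast
qed

lemma face_in_flag: "x \<in> F \<Longrightarrow> \<exists>\<Phi>. is_flag F lq \<Phi> \<and> x \<in> \<Phi>"
  using extend[of "{x}"] refl by auto

lemma pair_in_flag: "x \<in> F \<Longrightarrow> y \<in> F \<Longrightarrow> lq x y \<Longrightarrow> \<exists>\<Phi>. is_flag F lq \<Phi> \<and> x \<in> \<Phi> \<and> y \<in> \<Phi>"
  using extend[of "{x,y}"] refl by auto

lemma flag_ex: "\<exists>\<Phi>. is_flag F lq \<Phi>"
  using extend[of "{}"] by auto

definition face :: "'a set \<Rightarrow> int \<Rightarrow> 'a" where
  "face \<Phi> i = (THE x. x \<in> \<Phi> \<and> rk x = i)"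

lemma face: assumes "is_flag F lq \<Phi>" "-1 \<le> i" "i \<le> int n"
  shows "face \<Phi> i \<in> \<Phi>" "rk (face \<Phi> i) = i"
  using theI'[OF flag_rank[OF assms]] unfolding face_def by auto

lemma face_eq: assumes "is_flag F lq \<Phi>" "x \<in> \<Phi>" shows "face \<Phi> (rk x) = x"
proof -
  have r: "-1 \<le> rk x" "rk x \<le> int n" using rk_range flag_sub[OF assms(1)] assms(2) by auto
  show ?thesis using flag_inj[OF assms(1) face(1)[OF assms(1) r] assms(2)] face(2)[OF assms(1) r] by simp
qed

end


context ptope begin

lemma adj_flags: "i_adjacent F lq rk i \<Phi> \<Psi> \<Longrightarrow> is_flag F lq \<Phi> \<and> is_flag F lq \<Psi> \<and> \<Phi> \<noteq> \<Psi>"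
  unfolding i_adjacent_def by blast

lemma adj_sym: assumes a: "i_adjacent F lq rk i \<Phi> \<Psi>" shows "i_adjacent F lq rk i \<Psi> \<Phi>"
proof -
  have fl: "is_flag F lq \<Phi>" "is_flag F lq \<Psi>" "\<Phi> \<noteq> \<Psi>" using adj_flags[OF a] by auto
  have "\<forall>x\<in>\<Psi>. rk x \<noteq> int i \<longrightarrow> x \<in> \<Phi>"
  proof (intro ballI impI)
    fix x assume x: "x \<in> \<Psi>" "rk x \<noteq> int i"
    have r: "-1 \<le> rk x" "rk x \<le> int n" using rk_range flag_sub fl x by blast+
    have "face \<Phi> (rk x) \<in> \<Phi>" "rk (face \<Phi> (rk x)) = rk x" using face[OF fl(1) r] by auto
    then have "face \<Phi> (rk x) \<in> \<Psi>" using a x unfolding i_adjacent_def by auto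
    then have "face \<Phi> (rk x) = x" using flag_inj[OF fl(2)] x \<open>rk (face \<Phi> (rk x)) = rk x\<close> by blast
    then show "x \<in> \<Phi>" using \<open>face \<Phi> (rk x) \<in> \<Phi>\<close> by simp
  qed
  then show ?thesis using fl unfolding i_adjacent_def by blast
qed

lemma adj_mid: assumes a: "i_adjacent F lq rk i \<Phi> \<Psi>" and i: "i < n"
  shows "face \<Psi> (int i) \<in> {z\<in>F. lq (face \<Phi> (int i - 1)) z \<and> lq z (face \<Phi> (int i + 1)) \<and>
             z \<noteq> face \<Phi> (int i - 1) \<and> z \<noteq> face \<Phi> (int i + 1)}"
    and "face \<Psi> (int i) \<noteq> face \<Phi> (int i)"
proof -
  have fl: "is_flag F lq \<Phi>" "is_flag F lq \<Psi>" "\<Phi> \<noteq> \<Psi>" using adj_flags[OF a] by auto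
  have lo: "face \<Phi> (int i - 1) \<in> \<Phi>" "rk (face \<Phi> (int i - 1)) = int i - 1" using face[OF fl(1)] i by auto
  have hi: "face \<Phi> (int i + 1) \<in> \<Phi>" "rk (face \<Phi> (int i + 1)) = int i + 1" using face[OF fl(1)] i by auto
  have z: "face \<Psi> (int i) \<in> \<Psi>" "rk (face \<Psi> (int i)) = int i" using face[OF fl(2)] i by auto
  have lo2: "face \<Phi> (int i - 1) \<in> \<Psi>" using lo a unfolding i_adjacent_def by auto
  have hi2: "face \<Phi> (int i + 1) \<in> \<Psi>" using hi a unfolding i_adjacent_def by auto
  show "face \<Psi> (int i) \<in> {z\<in>F. lq (face \<Phi> (int i - 1)) z \<and> lq z (face \<Phi> (int i + 1)) \<and>
             z \<noteq> face \<Phi> (int i - 1) \<and> z \<noteq> face \<Phi> (int i + 1)}"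
    using z lo hi lo2 hi2 flag_le[OF fl(2)] flag_sub[OF fl(2)] by auto
  show "face \<Psi> (int i) \<noteq> face \<Phi> (int i)"
  proof
    assume eq: "face \<Psi> (int i) = face \<Phi> (int i)"
    have "\<Phi> \<subseteq> \<Psi>"
    proof
      fix x assume x: "x \<in> \<Phi>"
      show "x \<in> \<Psi>"
      proof (cases "rk x = int i")
        case True
        then have "x = face \<Phi> (int i)" using face_eq[OF fl(1) x] by simp
        then show ?thesis using eq z by simp
      next
        case False then show ?thesis using a x unfolding i_adjacent_def by auto
      qed
    qed
    then show False using flag_eq fl by blast
  qed
qed

lemma adj_unique: assumes a1: "i_adjacent F lq rk i \<Phi> \<Psi>1" and a2: "i_adjacent F lq rk i \<Phi> \<Psi>2"
  and i: "i < n" shows "\<Psi>1 = \<Psi>2"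
proof -
  have fl: "is_flag F lq \<Phi>" "is_flag F lq \<Psi>1" "is_flag F lq \<Psi>2" using adj_flags[OF a1] adj_flags[OF a2] by auto
  let ?S = "{z\<in>F. lq (face \<Phi> (int i - 1)) z \<and> lq z (face \<Phi> (int i + 1)) \<and>
             z \<noteq> face \<Phi> (int i - 1) \<and> z \<noteq> face \<Phi> (int i + 1)}"
  have lo: "face \<Phi> (int i - 1) \<in> \<Phi>" "rk (face \<Phi> (int i - 1)) = int i - 1" using face[OF fl(1)] i by auto
  have hi: "face \<Phi> (int i + 1) \<in> \<Phi>" "rk (face \<Phi> (int i + 1)) = int i + 1" using face[OF fl(1)] i by auto
  have z0: "face \<Phi> (int i) \<in> \<Phi>" "rk (face \<Phi> (int i)) = int i" using face[OF fl(1)] i by auto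
  have loF: "face \<Phi> (int i - 1) \<in> F" "face \<Phi> (int i + 1) \<in> F" "face \<Phi> (int i) \<in> F"
    using flag_sub[OF fl(1)] lo(1) hi(1) z0(1) by auto
  have lh: "lq (face \<Phi> (int i - 1)) (face \<Phi> (int i + 1))"
    by (rule flag_le[OF fl(1) lo(1) hi(1)]) (simp add: lo(2) hi(2))
  have c: "card ?S = 2"
    by (rule diamond[OF loF(1) loF(2) lh]) (simp add: lo(2) hi(2))
  have l0: "lq (face \<Phi> (int i - 1)) (face \<Phi> (int i))"
    by (rule flag_le[OF fl(1) lo(1) z0(1)]) (simp add: lo(2) z0(2))
  have h0: "lq (face \<Phi> (int i)) (face \<Phi> (int i + 1))"
    by (rule flag_le[OF fl(1) z0(1) hi(1)]) (simp add: hi(2) z0(2))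
  have ne0: "face \<Phi> (int i) \<noteq> face \<Phi> (int i - 1)" "face \<Phi> (int i) \<noteq> face \<Phi> (int i + 1)"
    using lo(2) hi(2) z0(2) by auto
  have z0S: "face \<Phi> (int i) \<in> ?S" using loF(3) l0 h0 ne0 by blast
  note z1 = adj_mid[OF a1 i]
  note z2 = adj_mid[OF a2 i]
  have eq: "face \<Psi>1 (int i) = face \<Psi>2 (int i)"
  proof (rule ccontr)
    assume ne: "face \<Psi>1 (int i) \<noteq> face \<Psi>2 (int i)"
    have fin: "finite ?S"
    proof (rule ccontr)
      assume "infinite ?S" then have "card ?S = 0" by (rule card.infinite)
      then show False using c by simp
    qed
    have sub: "{face \<Phi> (int i), face \<Psi>1 (int i), face \<Psi>2 (int i)} \<subseteq> ?S"
      by (intro insert_subsetI empty_subsetI z0S z1(1) z2(1))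
    have "card {face \<Phi> (int i), face \<Psi>1 (int i), face \<Psi>2 (int i)} \<le> card ?S"
      by (rule card_mono[OF fin sub])
    moreover have "card {face \<Phi> (int i), face \<Psi>1 (int i), face \<Psi>2 (int i)} = 3"
      using ne z1(2) z2(2) by simp
    ultimately show False using c by linarith
  qed
  have "\<Psi>1 \<subseteq> \<Psi>2"
  proof
    fix x assume x: "x \<in> \<Psi>1"
    show "x \<in> \<Psi>2"
    proof (cases "rk x = int i")
      case True
      then have "x = face \<Psi>1 (int i)" using face_eq[OF fl(2) x] by simp
      then show ?thesis using eq face(1)[OF fl(3), of "int i"] i by simp
    next
      case False
      have s1: "\<forall>x\<in>\<Psi>1. rk x \<noteq> int i \<longrightarrow> x \<in> \<Phi>" using adj_sym[OF a1] unfolding i_adjacent_def by blast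
      have s2: "\<forall>x\<in>\<Phi>. rk x \<noteq> int i \<longrightarrow> x \<in> \<Psi>2" using a2 unfolding i_adjacent_def by blast
      show ?thesis using s1 s2 x False by blast
    qed
  qed
  then show ?thesis using flag_eq fl by blast
qed

definition agree :: "int \<Rightarrow> int \<Rightarrow> 'a set \<Rightarrow> 'a set \<Rightarrow> bool" where
  "agree lo hi A B \<longleftrightarrow> (\<forall>x. (rk x \<le> lo \<or> hi \<le> rk x) \<longrightarrow> (x \<in> A \<longleftrightarrow> x \<in> B))"

lemma agree_sub: assumes "is_flag F lq A" "is_flag F lq B"
  "\<forall>x\<in>A. (rk x \<le> lo \<or> hi \<le> rk x) \<longrightarrow> x \<in> B" shows "agree lo hi A B"
  unfolding agree_def
proof (intro allI impI iffI)
  fix x assume o: "rk x \<le> lo \<or> hi \<le> rk x"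
  show "x \<in> A \<Longrightarrow> x \<in> B" using assms o by blast
  assume xB: "x \<in> B"
  have r: "-1 \<le> rk x" "rk x \<le> int n" using rk_range flag_sub assms(2) xB by blast+
  have "face A (rk x) \<in> A" "rk (face A (rk x)) = rk x" using face[OF assms(1) r] by auto
  then have "face A (rk x) \<in> B" using assms(3) o by auto
  then have "face A (rk x) = x" using flag_inj[OF assms(2)] xB \<open>rk (face A (rk x)) = rk x\<close> by blast
  then show "x \<in> A" using \<open>face A (rk x) \<in> A\<close> by simp
qed

lemma splice: assumes fl: "is_flag F lq \<Phi>" "is_flag F lq \<Psi>" and p: "p \<in> \<Phi>" "p \<in> \<Psi>"
  shows "is_flag F lq ({y\<in>\<Psi>. rk y \<le> rk p} \<union> {y\<in>\<Phi>. rk p \<le> rk y})"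
  unfolding is_flag_def
proof (intro conjI ballI impI)
  let ?T = "{y\<in>\<Psi>. rk y \<le> rk p} \<union> {y\<in>\<Phi>. rk p \<le> rk y}"
  show "?T \<subseteq> F" using flag_sub fl by blast
  have pF: "p \<in> F" using flag_sub fl p by blast
  fix x assume x: "x \<in> ?T"
  {
    fix y assume y: "y \<in> ?T"
    show "lq x y \<or> lq y x"
    proof -
      have c1: "lq a b" if "a \<in> \<Psi>" "rk a \<le> rk p" "b \<in> \<Phi>" "rk p \<le> rk b" for a b
        using trans[of a p b] flag_le[OF fl(2) that(1) p(2) that(2)] flag_le[OF fl(1) p(1) that(3) that(4)]
          flag_sub fl that pF by blast
      show ?thesis using x y c1 flag_cmp fl by blast
    qed
  }
next
  let ?T = "{y\<in>\<Psi>. rk y \<le> rk p} \<union> {y\<in>\<Phi>. rk p \<le> rk y}"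
  have pF: "p \<in> F" using flag_sub fl p by blast
  fix x assume xF: "x \<in> F" and cmp: "\<forall>y\<in>?T. lq x y \<or> lq y x"
  have "p \<in> ?T" using p by auto
  then have "lq x p \<or> lq p x" using cmp by blast
  then show "x \<in> ?T"
  proof
    assume xp: "lq x p"
    have "\<forall>y\<in>\<Psi>. lq x y \<or> lq y x"
    proof
      fix y assume y: "y \<in> \<Psi>"
      show "lq x y \<or> lq y x"
      proof (cases "rk y \<le> rk p")
        case True then show ?thesis using cmp y by blast
      next
        case False
        then have "lq p y" using flag_le[OF fl(2) p(2) y] by simp
        then show ?thesis using trans[of x p y] xF pF y flag_sub fl xp by blast
      qed
    qed
    then have "x \<in> \<Psi>" using flag_max fl xF by blast
    then show ?thesis using rk_le[OF xF pF xp] by blast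
  next
    assume px: "lq p x"
    have "\<forall>y\<in>\<Phi>. lq x y \<or> lq y x"
    proof
      fix y assume y: "y \<in> \<Phi>"
      show "lq x y \<or> lq y x"
      proof (cases "rk p \<le> rk y")
        case True then show ?thesis using cmp y by blast
      next
        case False
        then have "lq y p" using flag_le[OF fl(1) y p(1)] by simp
        then show ?thesis using trans[of y p x] xF pF y flag_sub fl px by blast
      qed
    qed
    then have "x \<in> \<Phi>" using flag_max fl xF by blast
    then show ?thesis using rk_le[OF pF xF px] by blast
  qed
qed

end


lemma rtp_mono: "R\<^sup>*\<^sup>* a b \<Longrightarrow> (\<And>x y. R x y \<Longrightarrow> S x y) \<Longrightarrow> S\<^sup>*\<^sup>* a b"
proof (induction rule: rtranclp_induct)
  case base then show ?case by simp
next
  case (step y z) then show ?case by (meson rtranclp.rtrancl_into_rtrancl)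
qed

context ptope begin

definition conn :: "int \<Rightarrow> int \<Rightarrow> 'a set \<Rightarrow> 'a set \<Rightarrow> bool" where
  "conn lo hi = (\<lambda>A B. \<exists>j. lo < int j \<and> int j < hi \<and> i_adjacent F lq rk j A B)\<^sup>*\<^sup>*"

lemma conn_mono: "conn lo hi A B \<Longrightarrow> lo' \<le> lo \<Longrightarrow> hi \<le> hi' \<Longrightarrow> conn lo' hi' A B"
  unfolding conn_def by (erule rtp_mono) force

lemma conn_trans: "conn lo hi A B \<Longrightarrow> conn lo hi B C \<Longrightarrow> conn lo hi A C"
  unfolding conn_def by (rule rtranclp_trans)

lemma agree_refl: "agree lo hi A A" unfolding agree_def by blast

lemma sfc:
  "\<And>a b \<Phi> \<Psi>. nat (rk b - rk a) = d \<Longrightarrow> a \<in> F \<Longrightarrow> b \<in> F \<Longrightarrow> lq a b \<Longrightarrow>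
     is_flag F lq \<Phi> \<Longrightarrow> is_flag F lq \<Psi> \<Longrightarrow> a \<in> \<Phi> \<Longrightarrow> b \<in> \<Phi> \<Longrightarrow>
     agree (rk a) (rk b) \<Phi> \<Psi> \<Longrightarrow> conn (rk a) (rk b) \<Phi> \<Psi>"
proof (induction d rule: less_induct)
  case (less d a b \<Phi> \<Psi>)
  note fl = less.prems(5,6)
  note ag = less.prems(9)
  have ab: "rk a \<le> rk b" using rk_le less.prems(2-4) by blast
  have aP: "a \<in> \<Psi>" "b \<in> \<Psi>" using ag less.prems(7,8) unfolding agree_def by auto
  have ra: "-1 \<le> rk a" "rk b \<le> int n" using rk_range less.prems(2,3) by auto
  show ?case
  proof (cases "rk b - rk a \<le> 2")
    case True
    show ?thesis
    proof (cases "\<Phi> = \<Psi>")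
      case True then show ?thesis unfolding conn_def by simp
    next
      case ne: False
      have small: "rk b - rk a = 2"
      proof (rule ccontr)
        assume "rk b - rk a \<noteq> 2"
        then have le1: "rk b - rk a \<le> 1" using True by simp
        have "\<Phi> \<subseteq> \<Psi>"
        proof
          fix x assume x: "x \<in> \<Phi>"
          have "rk x \<le> rk a \<or> rk b \<le> rk x" using le1 by linarith
          then show "x \<in> \<Psi>" using ag x unfolding agree_def by blast
        qed
        then show False using flag_eq fl ne by blast
      qed
      define j where "j = nat (rk a + 1)"
      have j: "int j = rk a + 1" using ra j_def by simp
      have "i_adjacent F lq rk j \<Phi> \<Psi>"
        unfolding i_adjacent_def
      proof (intro conjI ballI impI)
        fix x assume x: "x \<in> \<Phi>" "rk x \<noteq> int j"
        have "rk x \<le> rk a \<or> rk b \<le> rk x" using x(2) j small by linarith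
        then show "x \<in> \<Psi>" using ag x unfolding agree_def by blast
      qed (use fl ne in auto)
      then show ?thesis unfolding conn_def using j small
        by (intro r_into_rtranclp) (rule exI[of _ j], simp)
    qed
  next
    case False
    have A: "conn (rk a) (rk b) \<Phi>' \<Psi>'"
      if f1: "is_flag F lq \<Phi>'" and f2: "is_flag F lq \<Psi>'" and g1: "agree (rk a) (rk b) \<Phi> \<Phi>'"
        and g2: "agree (rk a) (rk b) \<Phi> \<Psi>'" and p1: "p \<in> \<Phi>'" and p2: "p \<in> \<Psi>'"
        and r1: "rk a < rk p" and r2: "rk p < rk b" for \<Phi>' \<Psi>' p
    proof -
      define \<Theta> where "\<Theta> = {y\<in>\<Psi>'. rk y \<le> rk p} \<union> {y\<in>\<Phi>'. rk p \<le> rk y}"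
      have fT: "is_flag F lq \<Theta>" unfolding \<Theta>_def by (rule splice[OF f1 f2 p1 p2])
      have pF: "p \<in> F" using flag_sub f1 p1 by blast
      have a1: "a \<in> \<Phi>'" "b \<in> \<Phi>'" using g1 less.prems(7,8) unfolding agree_def by auto
      have a2: "a \<in> \<Psi>'" "b \<in> \<Psi>'" using g2 less.prems(7,8) unfolding agree_def by auto
      have ap: "lq a p" by (rule flag_le[OF f1 a1(1) p1]) (use r1 in simp)
      have pb: "lq p b" by (rule flag_le[OF f1 p1 a1(2)]) (use r2 in simp)
      have g12: "\<And>x. rk x \<le> rk a \<or> rk b \<le> rk x \<Longrightarrow> x \<in> \<Phi>' \<Longrightarrow> x \<in> \<Psi>'"
        using g1 g2 unfolding agree_def by blast
      have ag1: "agree (rk a) (rk p) \<Phi>' \<Theta>"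
      proof (rule agree_sub[OF f1 fT], intro ballI impI)
        fix x assume x: "x \<in> \<Phi>'" "rk x \<le> rk a \<or> rk p \<le> rk x"
        show "x \<in> \<Theta>"
        proof (cases "rk p \<le> rk x")
          case True then show ?thesis using x unfolding \<Theta>_def by blast
        next
          case False
          then have "rk x \<le> rk a" using x by simp
          then have "x \<in> \<Psi>'" using g12 x by blast
          then show ?thesis using False unfolding \<Theta>_def by simp
        qed
      qed
      have aT: "a \<in> \<Theta>" "p \<in> \<Theta>" "b \<in> \<Theta>" using a2 p1 r1 r2 a1 unfolding \<Theta>_def by auto
      have c1: "conn (rk a) (rk p) \<Phi>' \<Theta>"
        by (rule less.IH[OF _ HOL.refl less.prems(2) pF ap f1 fT a1(1) p1 ag1]) (use r1 r2 less.prems(1) in linarith)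
      have ag2: "agree (rk p) (rk b) \<Theta> \<Psi>'"
      proof (rule agree_sub[OF fT f2], intro ballI impI)
        fix x assume x: "x \<in> \<Theta>" "rk x \<le> rk p \<or> rk b \<le> rk x"
        show "x \<in> \<Psi>'"
        proof (cases "x \<in> \<Psi>'")
          case False
          then have xP: "x \<in> \<Phi>'" "rk p \<le> rk x" using x(1) unfolding \<Theta>_def by auto
          show ?thesis
          proof (cases "rk x \<le> rk p")
            case True
            then have "x = p" using flag_inj[OF f1 xP(1) p1] xP(2) by simp
            then show ?thesis using p2 by simp
          next
            case False
            then show ?thesis using g12 x(2) xP(1) by blast
          qed
        qed simp
      qed
      have c2: "conn (rk p) (rk b) \<Theta> \<Psi>'"
        by (rule less.IH[OF _ HOL.refl pF less.prems(3) pb fT f2 aT(2) aT(3) ag2]) (use r1 r2 less.prems(1) in linarith)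
      have c1': "conn (rk a) (rk b) \<Phi>' \<Theta>" by (rule conn_mono[OF c1]) (use r2 in auto)
      have c2': "conn (rk a) (rk b) \<Theta> \<Psi>'" by (rule conn_mono[OF c2]) (use r1 in auto)
      show ?thesis by (rule conn_trans[OF c1' c2'])
    qed
    define u where "u = face \<Phi> (rk a + 1)"
    define v where "v = face \<Psi> (rk a + 1)"
    have ur: "-1 \<le> rk a + 1" "rk a + 1 \<le> int n" using ra False by auto
    have u: "u \<in> \<Phi>" "rk u = rk a + 1" using face[OF fl(1) ur] u_def by auto
    have v: "v \<in> \<Psi>" "rk v = rk a + 1" using face[OF fl(2) ur] v_def by auto
    have proper_r: "rk a < rk p \<and> rk p < rk b" if "proper_in_section F lq a b p" for p
      using that less.prems(2,3) rk_mono unfolding proper_in_section_def by blast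
    have propu: "proper_in_section F lq a b u"
      unfolding proper_in_section_def
    proof (intro conjI)
      show "u \<in> F" using u flag_sub fl by blast
      show "lq a u" by (rule flag_le[OF fl(1) less.prems(7) u(1)]) (use u in simp)
      show "lq u b" by (rule flag_le[OF fl(1) u(1) less.prems(8)]) (use u False in simp)
    qed (use u False in auto)
    have propv: "proper_in_section F lq a b v"
      unfolding proper_in_section_def
    proof (intro conjI)
      show "v \<in> F" using v flag_sub fl by blast
      show "lq a v" by (rule flag_le[OF fl(2) aP(1) v(1)]) (use v in simp)
      show "lq v b" by (rule flag_le[OF fl(2) v(1) aP(2)]) (use v False in simp)
    qed (use v False in auto)
    have sc: "section_connected F lq rk a b" using sconn less.prems(2-4) by blast
    then obtain ps where ps: "ps \<noteq> []" "hd ps = u" "last ps = v"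
      "\<forall>p\<in>set ps. proper_in_section F lq a b p"
      "\<forall>k. Suc k < length ps \<longrightarrow> lq (ps ! k) (ps ! Suc k) \<or> lq (ps ! Suc k) (ps ! k)"
      using propu propv False unfolding section_connected_def by force
    have walk: "\<forall>\<Theta>'. is_flag F lq \<Theta>' \<longrightarrow> agree (rk a) (rk b) \<Phi> \<Theta>' \<longrightarrow> ps ! j \<in> \<Theta>'
                   \<longrightarrow> conn (rk a) (rk b) \<Phi> \<Theta>'" if "j < length ps" for j
      using that
    proof (induction j)
      case 0
      have "ps ! 0 = u" using ps(1,2) hd_conv_nth by metis
      then show ?case using A[OF fl(1) _ agree_refl _ u(1)] u(2) False by auto
    next
      case (Suc j)
      let ?p = "ps ! j" and ?q = "ps ! Suc j"
      have pp: "proper_in_section F lq a b ?p" "proper_in_section F lq a b ?q"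
        using ps(4) Suc.prems by auto
      have pq: "lq ?p ?q \<or> lq ?q ?p" using ps(5) Suc.prems by blast
      define C where "C = {x\<in>\<Phi>. rk x \<le> rk a \<or> rk b \<le> rk x} \<union> {?p, ?q}"
      have CF: "C \<subseteq> F" using flag_sub fl pp unfolding C_def proper_in_section_def by auto
      have cmp_out: "lq x p \<or> lq p x" if "x \<in> \<Phi>" "rk x \<le> rk a \<or> rk b \<le> rk x"
        "proper_in_section F lq a b p" for x p
      proof -
        have pF: "p \<in> F" "lq a p" "lq p b" using that(3) unfolding proper_in_section_def by auto
        have xF: "x \<in> F" using that(1) flag_sub fl by blast
        show ?thesis
        proof (cases "rk x \<le> rk a")
          case True
          have "lq x a" by (rule flag_le[OF fl(1) that(1) less.prems(7) True])
          then show ?thesis using trans[OF xF less.prems(2) pF(1)] pF by blast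
        next
          case False
          then have "rk b \<le> rk x" using that(2) by simp
          then have "lq b x" by (rule flag_le[OF fl(1) less.prems(8) that(1)])
          then show ?thesis using trans[OF pF(1) less.prems(3) xF] pF by blast
        qed
      qed
      have Cc: "\<forall>x\<in>C. \<forall>y\<in>C. lq x y \<or> lq y x"
      proof (intro ballI)
        fix x y assume x: "x \<in> C" and y: "y \<in> C"
        have rp: "lq ?p ?p" "lq ?q ?q" using pp refl unfolding proper_in_section_def by auto
        have xs: "(x \<in> \<Phi> \<and> (rk x \<le> rk a \<or> rk b \<le> rk x)) \<or> x = ?p \<or> x = ?q"
          using x unfolding C_def by blast
        have ys: "(y \<in> \<Phi> \<and> (rk y \<le> rk a \<or> rk b \<le> rk y)) \<or> y = ?p \<or> y = ?q"
          using y unfolding C_def by blast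
        show "lq x y \<or> lq y x"
        proof (rule disjE[OF xs]; rule disjE[OF ys])
          assume "x \<in> \<Phi> \<and> (rk x \<le> rk a \<or> rk b \<le> rk x)" "y \<in> \<Phi> \<and> (rk y \<le> rk a \<or> rk b \<le> rk y)"
          then show ?thesis using flag_cmp[OF fl(1)] by blast
        next
          assume "x \<in> \<Phi> \<and> (rk x \<le> rk a \<or> rk b \<le> rk x)" "y = ?p \<or> y = ?q"
          then show ?thesis using cmp_out[OF _ _ pp(1), of x] cmp_out[OF _ _ pp(2), of x] by blast
        next
          assume "x = ?p \<or> x = ?q" "y \<in> \<Phi> \<and> (rk y \<le> rk a \<or> rk b \<le> rk y)"
          then show ?thesis using cmp_out[OF _ _ pp(1), of y] cmp_out[OF _ _ pp(2), of y] by blast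
        next
          assume "x = ?p \<or> x = ?q" "y = ?p \<or> y = ?q"
          then show ?thesis using pq rp by blast
        qed
      qed
      obtain \<Theta> where T: "is_flag F lq \<Theta>" "C \<subseteq> \<Theta>" using extend[OF CF Cc] by blast
      have agT: "agree (rk a) (rk b) \<Phi> \<Theta>"
        by (rule agree_sub[OF fl(1) T(1)]) (use T(2) in \<open>auto simp: C_def\<close>)
      have pT: "?p \<in> \<Theta>" using T(2) unfolding C_def by blast
      have c1: "conn (rk a) (rk b) \<Phi> \<Theta>" using Suc.IH[rule_format, OF _ T(1) agT pT] Suc.prems by simp
      show ?case
      proof (intro allI impI)
        fix \<Theta>' assume t': "is_flag F lq \<Theta>'" "agree (rk a) (rk b) \<Phi> \<Theta>'" "?q \<in> \<Theta>'"
        have "conn (rk a) (rk b) \<Theta> \<Theta>'"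
          by (rule A[OF T(1) t'(1) agT t'(2) _ t'(3)]) (use T(2) proper_r[OF pp(2)] in \<open>auto simp: C_def\<close>)
        then show "conn (rk a) (rk b) \<Phi> \<Theta>'" using conn_trans c1 by blast
      qed
    qed
    have "ps ! (length ps - 1) = v" using ps(1,3) last_conv_nth by metis
    then show ?thesis using walk[of "length ps - 1"] ps(1) fl(2) ag v(1) by auto
  qed
qed

end


context ptope begin

lemma bot_ex: "\<exists>b\<in>F. rk b = -1 \<and> (\<forall>\<Phi>. is_flag F lq \<Phi> \<longrightarrow> b \<in> \<Phi>)"
proof -
  obtain b where b: "b \<in> F" "\<forall>x\<in>F. lq b x" using Pbot by blast
  have inall: "b \<in> \<Phi>" if "is_flag F lq \<Phi>" for \<Phi>
    using flag_max[OF that b(1)] b(2) flag_sub[OF that] by blast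
  obtain \<Phi>0 where f0: "is_flag F lq \<Phi>0" using flag_ex by blast
  have r: "-1 \<le> (-1::int)" "(-1::int) \<le> int n" by auto
  have "b = face \<Phi>0 (-1)"
  proof (rule ccontr)
    assume ne: "b \<noteq> face \<Phi>0 (-1)"
    have fF: "face \<Phi>0 (-1) \<in> F" using face(1)[OF f0 r] flag_sub[OF f0] by blast
    have "rk b < rk (face \<Phi>0 (-1))" using rk_mono[OF b(1) fF] b(2) fF ne by blast
    then show False using face(2)[OF f0 r] rk_range[OF b(1)] by simp
  qed
  then have "rk b = -1" using face(2)[OF f0 r] by simp
  then show ?thesis using b inall by blast
qed

lemma top_ex: "\<exists>t\<in>F. rk t = int n \<and> (\<forall>\<Phi>. is_flag F lq \<Phi> \<longrightarrow> t \<in> \<Phi>)"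
proof -
  obtain b where b: "b \<in> F" "\<forall>x\<in>F. lq x b" using Ptop by blast
  have inall: "b \<in> \<Phi>" if "is_flag F lq \<Phi>" for \<Phi>
    using flag_max[OF that b(1)] b(2) flag_sub[OF that] by blast
  obtain \<Phi>0 where f0: "is_flag F lq \<Phi>0" using flag_ex by blast
  have r: "-1 \<le> int n" "int n \<le> int n" by auto
  have "b = face \<Phi>0 (int n)"
  proof (rule ccontr)
    assume ne: "b \<noteq> face \<Phi>0 (int n)"
    have fF: "face \<Phi>0 (int n) \<in> F" using face(1)[OF f0 r] flag_sub[OF f0] by blast
    have "rk (face \<Phi>0 (int n)) < rk b" using rk_mono[OF fF b(1)] b(2) fF ne by blast
    then show False using face(2)[OF f0 r] rk_range[OF b(1)] by simp
  qed
  then have "rk b = int n" using face(2)[OF f0 r] by simp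
  then show ?thesis using b inall by blast
qed

lemma conn_face: assumes fl: "is_flag F lq \<Phi>" "is_flag F lq \<Psi>" and x: "x \<in> \<Phi>" "x \<in> \<Psi>"
  shows "(\<lambda>A B. \<exists>j. j < n \<and> int j \<noteq> rk x \<and> i_adjacent F lq rk j A B)\<^sup>*\<^sup>* \<Phi> \<Psi>"
proof -
  obtain b where b: "b \<in> F" "rk b = -1" "\<forall>\<Phi>. is_flag F lq \<Phi> \<longrightarrow> b \<in> \<Phi>" using bot_ex by blast
  obtain t where t: "t \<in> F" "rk t = int n" "\<forall>\<Phi>. is_flag F lq \<Phi> \<longrightarrow> t \<in> \<Phi>" using top_ex by blast
  have xF: "x \<in> F" using x flag_sub fl by blast
  have xr: "-1 \<le> rk x" "rk x \<le> int n" using rk_range[OF xF] by auto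
  define \<Theta> where "\<Theta> = {y\<in>\<Psi>. rk y \<le> rk x} \<union> {y\<in>\<Phi>. rk x \<le> rk y}"
  have fT: "is_flag F lq \<Theta>" unfolding \<Theta>_def by (rule splice[OF fl x])
  have bx: "lq b x" by (rule flag_le[OF fl(1) _ x(1)]) (use b fl xr in auto)
  have xt: "lq x t" by (rule flag_le[OF fl(1) x(1)]) (use t fl xr in auto)
  have ag1: "agree (rk b) (rk x) \<Phi> \<Theta>"
  proof (rule agree_sub[OF fl(1) fT], intro ballI impI)
    fix y assume y: "y \<in> \<Phi>" "rk y \<le> rk b \<or> rk x \<le> rk y"
    show "y \<in> \<Theta>"
    proof (cases "rk x \<le> rk y")
      case True then show ?thesis using y unfolding \<Theta>_def by blast
    next
      case False
      then have "rk y = -1" using y b rk_range flag_sub fl by force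
      then have "y = b" using flag_inj[OF fl(1) y(1)] b fl by force
      then show ?thesis using b fl xr unfolding \<Theta>_def by auto
    qed
  qed
  have c1: "conn (rk b) (rk x) \<Phi> \<Theta>"
    by (rule sfc[OF HOL.refl b(1) xF bx fl(1) fT _ x(1) ag1]) (use b fl in auto)
  have ag2: "agree (rk x) (rk t) \<Theta> \<Psi>"
  proof (rule agree_sub[OF fT fl(2)], intro ballI impI)
    fix y assume y: "y \<in> \<Theta>" "rk y \<le> rk x \<or> rk t \<le> rk y"
    show "y \<in> \<Psi>"
    proof (cases "y \<in> \<Psi>")
      case False
      then have yP: "y \<in> \<Phi>" "rk x \<le> rk y" using y(1) unfolding \<Theta>_def by auto
      show ?thesis
      proof (cases "rk y \<le> rk x")
        case True
        then have "y = x" using flag_inj[OF fl(1) yP(1) x(1)] yP(2) by simp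
        then show ?thesis using x by simp
      next
        case False
        then have "rk y = int n" using y(2) t rk_range flag_sub fl yP by force
        then have "y = t" using flag_inj[OF fl(1) yP(1)] t fl by force
        then show ?thesis using t fl by auto
      qed
    qed simp
  qed
  have xT: "x \<in> \<Theta>" using x unfolding \<Theta>_def by auto
  have c2: "conn (rk x) (rk t) \<Theta> \<Psi>"
    by (rule sfc[OF HOL.refl xF t(1) xt fT fl(2) xT _ ag2]) (use t fl xr in \<open>auto simp: \<Theta>_def\<close>)
  have r1: "(\<lambda>A B. \<exists>j. j < n \<and> int j \<noteq> rk x \<and> i_adjacent F lq rk j A B)\<^sup>*\<^sup>* \<Phi> \<Theta>"
    using c1 unfolding conn_def by (rule rtp_mono) (use b xr in force)
  have r2: "(\<lambda>A B. \<exists>j. j < n \<and> int j \<noteq> rk x \<and> i_adjacent F lq rk j A B)\<^sup>*\<^sup>* \<Theta> \<Psi>"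
    using c2 unfolding conn_def by (rule rtp_mono) (use t xr in force)
  show ?thesis using r1 r2 by (rule rtranclp_trans)
qed

lemma card_below: assumes fl: "is_flag F lq \<Phi>" and x: "x \<in> \<Phi>"
  shows "card {y\<in>\<Phi>. lq y x \<and> y \<noteq> x} = nat (rk x + 1)"
proof -
  have xF: "x \<in> F" using x flag_sub fl by blast
  have eq: "{y\<in>\<Phi>. lq y x \<and> y \<noteq> x} = {y\<in>\<Phi>. rk y < rk x}"
  proof (rule equalityI; rule subsetI)
    fix y assume "y \<in> {y\<in>\<Phi>. lq y x \<and> y \<noteq> x}"
    then show "y \<in> {y\<in>\<Phi>. rk y < rk x}" using rk_mono[OF _ xF] flag_sub fl by blast
  next
    fix y assume y: "y \<in> {y\<in>\<Phi>. rk y < rk x}"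
    then have "lq y x" using flag_le[OF fl _ x] by auto
    moreover have "y \<noteq> x" using y by auto
    ultimately show "y \<in> {y\<in>\<Phi>. lq y x \<and> y \<noteq> x}" using y by blast
  qed
  have bij: "bij_betw rk {y\<in>\<Phi>. rk y < rk x} {-1..<rk x}"
    unfolding bij_betw_def
  proof
    show "inj_on rk {y\<in>\<Phi>. rk y < rk x}" using flag_inj[OF fl] by (auto intro: inj_onI)
    show "rk ` {y\<in>\<Phi>. rk y < rk x} = {-1..<rk x}"
    proof (rule equalityI; rule subsetI)
      fix i assume "i \<in> rk ` {y\<in>\<Phi>. rk y < rk x}"
      then show "i \<in> {-1..<rk x}" using rk_range flag_sub fl by fastforce
    next
      fix i assume i: "i \<in> {-1..<rk x}"
      then have r: "-1 \<le> i" "i \<le> int n" using rk_range[OF xF] by auto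
      have "face \<Phi> i \<in> {y\<in>\<Phi>. rk y < rk x}" using face[OF fl r] i by auto
      then show "i \<in> rk ` {y\<in>\<Phi>. rk y < rk x}" using face(2)[OF fl r] by force
    qed
  qed
  show ?thesis using bij_betw_same_card[OF bij] eq by simp
qed

lemma aut_flag: assumes a: "polytope_automorphism F lq \<alpha>" and fl: "is_flag F lq \<Phi>"
  shows "is_flag F lq (\<alpha> ` \<Phi>)"
proof -
  have bij: "bij_betw \<alpha> F F" and ord: "\<forall>x\<in>F. \<forall>y\<in>F. lq x y \<longleftrightarrow> lq (\<alpha> x) (\<alpha> y)"
    using a unfolding polytope_automorphism_def by auto
  have sub: "\<Phi> \<subseteq> F" using flag_sub[OF fl] .
  show ?thesis
    unfolding is_flag_def
  proof (intro conjI ballI impI)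
    show "\<alpha> ` \<Phi> \<subseteq> F" using bij sub unfolding bij_betw_def by blast
    fix x assume x: "x \<in> \<alpha> ` \<Phi>"
    {
      fix y assume y: "y \<in> \<alpha> ` \<Phi>"
      obtain x' y' where "x' \<in> \<Phi>" "y' \<in> \<Phi>" "x = \<alpha> x'" "y = \<alpha> y'" using x y by blast
      then show "lq x y \<or> lq y x" using ord flag_cmp[OF fl] sub by blast
    }
  next
    have bij: "bij_betw \<alpha> F F" and ord: "\<forall>x\<in>F. \<forall>y\<in>F. lq x y \<longleftrightarrow> lq (\<alpha> x) (\<alpha> y)"
      using a unfolding polytope_automorphism_def by auto
    fix x assume xF: "x \<in> F" and c: "\<forall>y\<in>\<alpha> ` \<Phi>. lq x y \<or> lq y x"
    obtain x' where x': "x' \<in> F" "x = \<alpha> x'" using xF bij unfolding bij_betw_def by blast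
    have "\<forall>y\<in>\<Phi>. lq x' y \<or> lq y x'" using c x' ord sub by blast
    then have "x' \<in> \<Phi>" using flag_max[OF fl x'(1)] by blast
    then show "x \<in> \<alpha> ` \<Phi>" using x' by blast
  qed
qed

lemma aut_rank: assumes a: "polytope_automorphism F lq \<alpha>" and xF: "x \<in> F"
  shows "rk (\<alpha> x) = rk x"
proof -
  have bij: "bij_betw \<alpha> F F" and ord: "\<forall>x\<in>F. \<forall>y\<in>F. lq x y \<longleftrightarrow> lq (\<alpha> x) (\<alpha> y)"
    using a unfolding polytope_automorphism_def by auto
  have inj: "inj_on \<alpha> F" using bij unfolding bij_betw_def by blast
  obtain \<Phi> where fl: "is_flag F lq \<Phi>" "x \<in> \<Phi>" using face_in_flag[OF xF] by blast
  have fl2: "is_flag F lq (\<alpha> ` \<Phi>)" by (rule aut_flag[OF a fl(1)])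
  have sub: "\<Phi> \<subseteq> F" using flag_sub[OF fl(1)] .
  have img: "\<alpha> ` {y\<in>\<Phi>. lq y x \<and> y \<noteq> x} = {y\<in>\<alpha> ` \<Phi>. lq y (\<alpha> x) \<and> y \<noteq> \<alpha> x}"
  proof (rule equalityI; rule subsetI)
    fix z assume "z \<in> \<alpha> ` {y\<in>\<Phi>. lq y x \<and> y \<noteq> x}"
    then obtain y where y: "y \<in> \<Phi>" "lq y x" "y \<noteq> x" "z = \<alpha> y" by blast
    have "\<alpha> y \<noteq> \<alpha> x" using inj y sub fl(2) unfolding inj_on_def by blast
    moreover have "lq (\<alpha> y) (\<alpha> x)" using ord[rule_format, of y x] sub y fl(2) by auto
    moreover have "z \<in> \<alpha> ` \<Phi>" using y by blast
    ultimately show "z \<in> {y\<in>\<alpha> ` \<Phi>. lq y (\<alpha> x) \<and> y \<noteq> \<alpha> x}" using y by simp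
  next
    fix z assume "z \<in> {y\<in>\<alpha> ` \<Phi>. lq y (\<alpha> x) \<and> y \<noteq> \<alpha> x}"
    then obtain y where y: "y \<in> \<Phi>" "z = \<alpha> y" "lq (\<alpha> y) (\<alpha> x)" "\<alpha> y \<noteq> \<alpha> x" by blast
    moreover have "lq y x" using ord[rule_format, of y x] sub y fl(2) by auto
    moreover have "y \<noteq> x" using y by blast
    ultimately have "y \<in> {y\<in>\<Phi>. lq y x \<and> y \<noteq> x}" using y by simp
    then show "z \<in> \<alpha> ` {y\<in>\<Phi>. lq y x \<and> y \<noteq> x}" using y by blast
  qed
  have "card {y\<in>\<Phi>. lq y x \<and> y \<noteq> x} = card {y\<in>\<alpha> ` \<Phi>. lq y (\<alpha> x) \<and> y \<noteq> \<alpha> x}"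
    using card_image[OF inj_on_subset[OF inj]] img sub by (metis (no_types, lifting) mem_Collect_eq subsetI subset_trans)
  then have "nat (rk x + 1) = nat (rk (\<alpha> x) + 1)"
    using card_below[OF fl] card_below[OF fl2] fl(2) by simp
  moreover have "-1 \<le> rk x" "-1 \<le> rk (\<alpha> x)" using rk_range xF bij unfolding bij_betw_def by auto
  ultimately show ?thesis by simp
qed

lemma aut_adj: assumes a: "polytope_automorphism F lq \<alpha>" and ad: "i_adjacent F lq rk i \<Phi> \<Psi>"
  shows "i_adjacent F lq rk i (\<alpha> ` \<Phi>) (\<alpha> ` \<Psi>)"
proof -
  have bij: "bij_betw \<alpha> F F" using a unfolding polytope_automorphism_def by auto
  have inj: "inj_on \<alpha> F" using bij unfolding bij_betw_def by blast
  have fl: "is_flag F lq \<Phi>" "is_flag F lq \<Psi>" "\<Phi> \<noteq> \<Psi>" using adj_flags[OF ad] by auto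
  have sub: "\<Phi> \<subseteq> F" "\<Psi> \<subseteq> F" using flag_sub fl by auto
  have ne: "\<alpha> ` \<Phi> \<noteq> \<alpha> ` \<Psi>" using inj_on_image_eq_iff[OF inj sub] fl(3) by blast
  have "\<forall>z\<in>\<alpha> ` \<Phi>. rk z \<noteq> int i \<longrightarrow> z \<in> \<alpha> ` \<Psi>"
  proof (intro ballI impI)
    fix z assume z: "z \<in> \<alpha> ` \<Phi>" "rk z \<noteq> int i"
    then obtain y where y: "y \<in> \<Phi>" "z = \<alpha> y" by blast
    have "rk y \<noteq> int i" using aut_rank[OF a] sub y z by auto
    then have "y \<in> \<Psi>" using ad y unfolding i_adjacent_def by blast
    then show "z \<in> \<alpha> ` \<Psi>" using y by blast
  qed
  then show ?thesis unfolding i_adjacent_def using aut_flag[OF a] fl ne by blast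
qed

end


locale pact = ptope F lq rk n for F :: "'a set" and lq rk n +
  fixes G :: "('g, 'm) monoid_scheme" and s :: "nat \<Rightarrow> 'g" and act :: "'g \<Rightarrow> 'a set \<Rightarrow> 'a set"
  assumes W: "string_C_group G s n" and A: "flag_action G s n F lq rk act"
begin

lemma grp: "group G" using W unfolding string_C_group_def by blast
lemma s_in: "i < n \<Longrightarrow> s i \<in> carrier G" using W unfolding string_C_group_def by blast
lemma s_sq: "i < n \<Longrightarrow> s i \<otimes>\<^bsub>G\<^esub> s i = \<one>\<^bsub>G\<^esub>" using W unfolding string_C_group_def by blast
lemma s_inv: "i < n \<Longrightarrow> inv\<^bsub>G\<^esub> (s i) = s i"
  using group.inv_equality[OF grp s_sq s_in s_in] by blast
lemma gen: "generate G (s ` {..<n}) = carrier G" using W unfolding string_C_group_def by blast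

lemma act_flag: "g \<in> carrier G \<Longrightarrow> is_flag F lq \<Phi> \<Longrightarrow> is_flag F lq (act g \<Phi>)"
  using A unfolding flag_action_def by blast
lemma act_one: "is_flag F lq \<Phi> \<Longrightarrow> act \<one>\<^bsub>G\<^esub> \<Phi> = \<Phi>"
  using A unfolding flag_action_def by blast
lemma act_mult: "g \<in> carrier G \<Longrightarrow> h \<in> carrier G \<Longrightarrow> is_flag F lq \<Phi> \<Longrightarrow>
    act (g \<otimes>\<^bsub>G\<^esub> h) \<Phi> = act h (act g \<Phi>)"
  using A unfolding flag_action_def by blast
lemma act_adj: "i < n \<Longrightarrow> is_flag F lq \<Phi> \<Longrightarrow> i_adjacent F lq rk i \<Phi> (act (s i) \<Phi>)"
  using A unfolding flag_action_def by blast

lemma adj_act: "i < n \<Longrightarrow> i_adjacent F lq rk i \<Phi> \<Psi> \<Longrightarrow> \<Psi> = act (s i) \<Phi>"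
  using adj_unique act_adj adj_flags by blast

lemma transitive: assumes "is_flag F lq \<Phi>" "is_flag F lq \<Psi>"
  shows "\<exists>g\<in>carrier G. \<Psi> = act g \<Phi>"
proof -
  obtain b where b: "b \<in> F" "rk b = -1" "\<forall>\<Phi>. is_flag F lq \<Phi> \<longrightarrow> b \<in> \<Phi>" using bot_ex by blast
  have c: "(\<lambda>A B. \<exists>j. j < n \<and> int j \<noteq> rk b \<and> i_adjacent F lq rk j A B)\<^sup>*\<^sup>* \<Phi> \<Psi>"
    using conn_face[OF assms] b assms by blast
  then show ?thesis
  proof (induction rule: rtranclp_induct)
    case base
    have "\<Phi> = act \<one>\<^bsub>G\<^esub> \<Phi>" using act_one assms by simp
    then show ?case using group.is_monoid[OF grp] monoid.one_closed by blast
  next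
    case (step y z)
    then obtain g j where g: "g \<in> carrier G" "y = act g \<Phi>" and j: "j < n" "i_adjacent F lq rk j y z"
      by blast
    have "z = act (s j) y" using adj_act j by blast
    also have "\<dots> = act (g \<otimes>\<^bsub>G\<^esub> s j) \<Phi>" using act_mult[OF g(1) s_in[OF j(1)] assms(1)] g by simp
    finally show ?case using monoid.m_closed[OF group.is_monoid[OF grp] g(1) s_in[OF j(1)]] by blast
  qed
qed

end

lemma equivar:
  assumes P1: "pact F lq rk n G s act" and P2: "pact F' lq' rk' n G s act'"
    and fl: "\<And>\<Phi>. is_flag F lq \<Phi> \<Longrightarrow> is_flag F' lq' (f \<Phi>)"
    and ad: "\<And>i \<Phi>. i < n \<Longrightarrow> is_flag F lq \<Phi> \<Longrightarrow> i_adjacent F' lq' rk' i (f \<Phi>) (f (act (s i) \<Phi>))"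
    and g: "g \<in> carrier G"
  shows "\<forall>\<Phi>. is_flag F lq \<Phi> \<longrightarrow> f (act g \<Phi>) = act' g (f \<Phi>)"
proof -
  interpret A: pact F lq rk n G s act by (rule P1)
  interpret B: pact F' lq' rk' n G s act' by (rule P2)
  have gg: "g \<in> generate G (s ` {..<n})" using g A.gen by simp
  have sub: "generate G (s ` {..<n}) \<subseteq> carrier G" using A.gen by simp
  show ?thesis using gg
  proof (induction rule: generate.induct)
    case one
    then show ?case using A.act_one B.act_one fl by simp
  next
    case (incl h)
    then obtain i where i: "i < n" "h = s i" by blast
    show ?case
    proof (intro allI impI)
      fix \<Phi> assume f: "is_flag F lq \<Phi>"
      show "f (act h \<Phi>) = act' h (f \<Phi>)" using B.adj_act[OF i(1) ad[OF i(1) f]] i by simp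
    qed
  next
    case (inv h)
    then obtain i where i: "i < n" "h = s i" by blast
    show ?case
    proof (intro allI impI)
      fix \<Phi> assume f: "is_flag F lq \<Phi>"
      show "f (act (inv\<^bsub>G\<^esub> h) \<Phi>) = act' (inv\<^bsub>G\<^esub> h) (f \<Phi>)"
        using B.adj_act[OF i(1) ad[OF i(1) f]] i A.s_inv[OF i(1)] by simp
    qed
  next
    case (eng h1 h2)
    have c: "h1 \<in> carrier G" "h2 \<in> carrier G" using eng.hyps sub by auto
    show ?case
    proof (intro allI impI)
      fix \<Phi> assume f: "is_flag F lq \<Phi>"
      have "f (act (h1 \<otimes>\<^bsub>G\<^esub> h2) \<Phi>) = f (act h2 (act h1 \<Phi>))" using A.act_mult[OF c f] by simp
      also have "\<dots> = act' h2 (f (act h1 \<Phi>))" using eng.IH(2) A.act_flag[OF c(1) f] by blast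
      also have "\<dots> = act' h2 (act' h1 (f \<Phi>))" using eng.IH(1) f by simp
      also have "\<dots> = act' (h1 \<otimes>\<^bsub>G\<^esub> h2) (f \<Phi>)" using B.act_mult[OF c fl[OF f]] by simp
      finally show "f (act (h1 \<otimes>\<^bsub>G\<^esub> h2) \<Phi>) = act' (h1 \<otimes>\<^bsub>G\<^esub> h2) (f \<Phi>)" .
    qed
  qed
qed



theorem theorem3:
  fixes G :: "('g, 'm) monoid_scheme" and s :: "nat \<Rightarrow> 'g" and n :: nat
    and FQ :: "'a set" and leQ :: "'a \<Rightarrow> 'a \<Rightarrow> bool" and rkQ :: "'a \<Rightarrow> int"
    and actQ :: "'g \<Rightarrow> 'a set \<Rightarrow> 'a set" and \<Phi>Q :: "'a set" and N :: "'g set"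
    and FR :: "'b set" and leR :: "'b \<Rightarrow> 'b \<Rightarrow> bool" and rkR :: "'b \<Rightarrow> int"
    and actR :: "'g \<Rightarrow> 'b set \<Rightarrow> 'b set"
    and FC :: "'c set" and leC :: "'c \<Rightarrow> 'c \<Rightarrow> bool" and rkC :: "'c \<Rightarrow> int"
    and actC :: "'g \<Rightarrow> 'c set \<Rightarrow> 'c set" and \<Phi>C :: "'c set"
  assumes W: "string_C_group G s n"
    and Q: "polytope FQ leQ rkQ n"
    and Q_act: "flag_action G s n FQ leQ rkQ actQ"
    and Q_base: "is_flag FQ leQ \<Phi>Q"
    and N_def: "N = flag_stabilizer G actQ \<Phi>Q"
    and C: "regular_polytope FC leC rkC n"
    and C_act: "flag_action G s n FC leC rkC actC"
    and C_base: "is_flag FC leC \<Phi>C"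
    and C_stab: "flag_stabilizer G actC \<Phi>C = core G N"
    and R: "regular_polytope FR leR rkR n"
    and R_act: "flag_action G s n FR leR rkR actR"
    and R_cov: "covers FR leR rkR FQ leQ rkQ n"
  shows "covers FR leR rkR FC leC rkC n"
proof -
  have Rp: "polytope FR leR rkR n" using R unfolding regular_polytope_def by blast
  have Cp: "polytope FC leC rkC n" using C unfolding regular_polytope_def by blast
  have pR: "pact FR leR rkR n G s actR" using Rp W R_act by (simp add: pact_def ptope_def pact_axioms_def)
  have pQ: "pact FQ leQ rkQ n G s actQ" using Q W Q_act by (simp add: pact_def ptope_def pact_axioms_def)
  have pC: "pact FC leC rkC n G s actC" using Cp W C_act by (simp add: pact_def ptope_def pact_axioms_def)
  interpret R: pact FR leR rkR n G s actR by (rule pR)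
  interpret Q: pact FQ leQ rkQ n G s actQ by (rule pQ)
  interpret C: pact FC leC rkC n G s actC by (rule pC)
  interpret grp: group G by (rule R.grp)
  obtain \<Psi>0 where \<Psi>0: "is_flag FR leR \<Psi>0" using R.flag_ex by blast

  have stab_all: "actR k \<Psi> = \<Psi>"
    if k: "k \<in> carrier G" "actR k \<Psi>0 = \<Psi>0" and f: "is_flag FR leR \<Psi>" for k \<Psi>
  proof -
    obtain \<alpha> where \<alpha>: "polytope_automorphism FR leR \<alpha>" "\<alpha> ` \<Psi>0 = \<Psi>"
      using R \<Psi>0 f unfolding regular_polytope_def by blast
    have eq: "\<forall>\<Phi>. is_flag FR leR \<Phi> \<longrightarrow> \<alpha> ` (actR k \<Phi>) = actR k (\<alpha> ` \<Phi>)"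
      by (rule equivar[OF pR pR, where f = "\<lambda>\<Phi>. \<alpha> ` \<Phi>"])
         (auto intro: R.aut_flag[OF \<alpha>(1)] R.aut_adj[OF \<alpha>(1) R.act_adj] k)
    have "actR k \<Psi> = actR k (\<alpha> ` \<Psi>0)" using \<alpha> by simp
    also have "\<dots> = \<alpha> ` (actR k \<Psi>0)" using eq \<Psi>0 by simp
    also have "\<dots> = \<Psi>" using k \<alpha> by simp
    finally show ?thesis .
  qed

  obtain \<gamma> where \<gamma>: "covering FR leR rkR FQ leQ rkQ n \<gamma>" using R_cov unfolding covers_def by blast
  have \<gamma>fl: "\<And>\<Phi>. is_flag FR leR \<Phi> \<Longrightarrow> is_flag FQ leQ (\<gamma> ` \<Phi>)" using \<gamma> unfolding covering_def by blast
  have \<gamma>ad: "\<And>i \<Phi> \<Psi>. i < n \<Longrightarrow> i_adjacent FR leR rkR i \<Phi> \<Psi> \<Longrightarrow> i_adjacent FQ leQ rkQ i (\<gamma> ` \<Phi>) (\<gamma> ` \<Psi>)"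
    using \<gamma> unfolding covering_def by blast
  have eq\<gamma>: "\<forall>\<Phi>. is_flag FR leR \<Phi> \<longrightarrow> \<gamma> ` (actR g \<Phi>) = actQ g (\<gamma> ` \<Phi>)" if g: "g \<in> carrier G" for g
    by (rule equivar[OF pR pQ, where f = "\<lambda>\<Phi>. \<gamma> ` \<Phi>"]) (auto intro: \<gamma>fl \<gamma>ad R.act_adj g)

  have Kcore: "actC k \<Phi>C = \<Phi>C" if k: "k \<in> carrier G" "actR k \<Psi>0 = \<Psi>0" for k
  proof -
    have fixQ: "actQ k \<Phi>' = \<Phi>'" if f: "is_flag FQ leQ \<Phi>'" for \<Phi>'
    proof -
      obtain u where u: "u \<in> carrier G" "\<Phi>' = actQ u (\<gamma> ` \<Psi>0)"
        using Q.transitive[OF \<gamma>fl[OF \<Psi>0] f] by blast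
      have \<Psi>1: "is_flag FR leR (actR u \<Psi>0)" using R.act_flag u \<Psi>0 by blast
      have "\<Phi>' = \<gamma> ` (actR u \<Psi>0)" using eq\<gamma>[OF u(1)] \<Psi>0 u by simp
      moreover have "actQ k (\<gamma> ` (actR u \<Psi>0)) = \<gamma> ` (actR k (actR u \<Psi>0))"
        using eq\<gamma>[OF k(1)] \<Psi>1 by simp
      moreover have "actR k (actR u \<Psi>0) = actR u \<Psi>0" using stab_all[OF k \<Psi>1] .
      ultimately show ?thesis by simp
    qed
    have "k \<in> core G N"
      unfolding core_def
    proof (rule INT_I)
      fix w assume w: "w \<in> carrier G"
      define x where "x = w \<otimes>\<^bsub>G\<^esub> k \<otimes>\<^bsub>G\<^esub> inv\<^bsub>G\<^esub> w"
      have xc: "x \<in> carrier G" using w k unfolding x_def by simp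
      have fw: "is_flag FQ leQ (actQ w \<Phi>Q)" using Q.act_flag w Q_base by blast
      have "actQ x \<Phi>Q = actQ (inv\<^bsub>G\<^esub> w) (actQ (w \<otimes>\<^bsub>G\<^esub> k) \<Phi>Q)"
        unfolding x_def using Q.act_mult w k Q_base by simp
      also have "\<dots> = actQ (inv\<^bsub>G\<^esub> w) (actQ k (actQ w \<Phi>Q))" using Q.act_mult w k Q_base by simp
      also have "\<dots> = actQ (inv\<^bsub>G\<^esub> w) (actQ w \<Phi>Q)" using fixQ[OF fw] by simp
      also have "\<dots> = actQ (w \<otimes>\<^bsub>G\<^esub> inv\<^bsub>G\<^esub> w) \<Phi>Q" by (rule Q.act_mult[OF w grp.inv_closed[OF w] Q_base, symmetric])
      also have "\<dots> = \<Phi>Q" using w Q.act_one Q_base by simp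
      finally have xN: "x \<in> N" using xc unfolding N_def flag_stabilizer_def by simp
      have "inv\<^bsub>G\<^esub> w \<otimes>\<^bsub>G\<^esub> x \<otimes>\<^bsub>G\<^esub> w = inv\<^bsub>G\<^esub> w \<otimes>\<^bsub>G\<^esub> ((w \<otimes>\<^bsub>G\<^esub> k) \<otimes>\<^bsub>G\<^esub> (inv\<^bsub>G\<^esub> w \<otimes>\<^bsub>G\<^esub> w))"
        unfolding x_def using w k by (simp add: grp.m_assoc)
      also have "\<dots> = (inv\<^bsub>G\<^esub> w \<otimes>\<^bsub>G\<^esub> w) \<otimes>\<^bsub>G\<^esub> k" using w k by (simp add: grp.m_assoc[symmetric])
      also have "\<dots> = k" using w k by simp
      finally show "k \<in> {inv\<^bsub>G\<^esub> w \<otimes>\<^bsub>G\<^esub> x \<otimes>\<^bsub>G\<^esub> w | x. x \<in> N}" using xN by force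
    qed
    then have "k \<in> flag_stabilizer G actC \<Phi>C" using C_stab by simp
    then show ?thesis unfolding flag_stabilizer_def by simp
  qed

  define sel where "sel \<Psi> = (SOME g. g \<in> carrier G \<and> \<Psi> = actR g \<Psi>0)" for \<Psi>
  define fC where "fC \<Psi> = actC (sel \<Psi>) \<Phi>C" for \<Psi>
  have fC_act: "fC (actR g \<Psi>0) = actC g \<Phi>C" if g: "g \<in> carrier G" for g
  proof -
    have ex: "\<exists>g'. g' \<in> carrier G \<and> actR g \<Psi>0 = actR g' \<Psi>0" using g by blast
    have "sel (actR g \<Psi>0) \<in> carrier G \<and> actR g \<Psi>0 = actR (sel (actR g \<Psi>0)) \<Psi>0"
      unfolding sel_def by (rule someI_ex[OF ex])
    then have g': "sel (actR g \<Psi>0) \<in> carrier G" "actR g \<Psi>0 = actR (sel (actR g \<Psi>0)) \<Psi>0" by auto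
    define h where "h = sel (actR g \<Psi>0)"
    define k where "k = h \<otimes>\<^bsub>G\<^esub> inv\<^bsub>G\<^esub> g"
    have h: "h \<in> carrier G" "actR g \<Psi>0 = actR h \<Psi>0" using g' unfolding h_def by auto
    have kc: "k \<in> carrier G" using h g unfolding k_def by simp
    have "actR k \<Psi>0 = actR (inv\<^bsub>G\<^esub> g) (actR h \<Psi>0)" unfolding k_def using R.act_mult h g \<Psi>0 by simp
    also have "\<dots> = actR (inv\<^bsub>G\<^esub> g) (actR g \<Psi>0)" using h by simp
    also have "\<dots> = actR (g \<otimes>\<^bsub>G\<^esub> inv\<^bsub>G\<^esub> g) \<Psi>0" by (rule R.act_mult[OF g grp.inv_closed[OF g] \<Psi>0, symmetric])
    also have "\<dots> = \<Psi>0" using g R.act_one \<Psi>0 by simp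
    finally have kC: "actC k \<Phi>C = \<Phi>C" using Kcore kc by blast
    have hk: "h = k \<otimes>\<^bsub>G\<^esub> g" unfolding k_def using h g by (simp add: grp.m_assoc)
    have "fC (actR g \<Psi>0) = actC h \<Phi>C" unfolding fC_def h_def by simp
    also have "\<dots> = actC g (actC k \<Phi>C)" using hk C.act_mult kc g C_base by simp
    also have "\<dots> = actC g \<Phi>C" using kC by simp
    finally show ?thesis .
  qed
  have Rtr: "\<exists>g\<in>carrier G. \<Psi> = actR g \<Psi>0" if "is_flag FR leR \<Psi>" for \<Psi>
    using R.transitive[OF \<Psi>0 that] .
  have fC_flag: "is_flag FC leC (fC \<Psi>)" if f: "is_flag FR leR \<Psi>" for \<Psi>
  proof -
    obtain g where g: "g \<in> carrier G" "\<Psi> = actR g \<Psi>0" using Rtr[OF f] by blast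
    show ?thesis using fC_act[OF g(1)] g C.act_flag C_base by simp
  qed
  have fC_eq: "fC (actR h \<Psi>) = actC h (fC \<Psi>)" if h: "h \<in> carrier G" and f: "is_flag FR leR \<Psi>" for h \<Psi>
  proof -
    obtain g where g: "g \<in> carrier G" "\<Psi> = actR g \<Psi>0" using Rtr[OF f] by blast
    have "actR h \<Psi> = actR (g \<otimes>\<^bsub>G\<^esub> h) \<Psi>0" using R.act_mult g h \<Psi>0 by simp
    then have "fC (actR h \<Psi>) = actC (g \<otimes>\<^bsub>G\<^esub> h) \<Phi>C" using fC_act g h by simp
    also have "\<dots> = actC h (actC g \<Phi>C)" using C.act_mult g h C_base by simp
    also have "\<dots> = actC h (fC \<Psi>)" using fC_act g by simp
    finally show ?thesis .
  qed

  define \<gamma>' where "\<gamma>' x = C.face (fC (SOME \<Psi>. is_flag FR leR \<Psi> \<and> x \<in> \<Psi>)) (rkR x)" for x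
  have key: "\<gamma>' x = C.face (fC \<Psi>) (rkR x)" if f: "is_flag FR leR \<Psi>" and x: "x \<in> \<Psi>" for x \<Psi>
  proof -
    have ex: "\<exists>\<Psi>. is_flag FR leR \<Psi> \<and> x \<in> \<Psi>" using f x by blast
    have s1: "is_flag FR leR (SOME \<Psi>. is_flag FR leR \<Psi> \<and> x \<in> \<Psi>) \<and> x \<in> (SOME \<Psi>. is_flag FR leR \<Psi> \<and> x \<in> \<Psi>)"
      by (rule someI_ex[OF ex])
    define \<Psi>' where "\<Psi>' = (SOME \<Psi>. is_flag FR leR \<Psi> \<and> x \<in> \<Psi>)"
    have s2: "is_flag FR leR \<Psi>'" "x \<in> \<Psi>'" using s1 unfolding \<Psi>'_def by auto
    have xr: "-1 \<le> rkR x" "rkR x \<le> int n" using R.rk_range R.flag_sub f x by blast+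
    have c: "(\<lambda>A B. \<exists>j. j < n \<and> int j \<noteq> rkR x \<and> i_adjacent FR leR rkR j A B)\<^sup>*\<^sup>* \<Psi>' \<Psi>"
      by (rule R.conn_face[OF s2(1) f s2(2) x])
    have "C.face (fC \<Psi>') (rkR x) = C.face (fC \<Psi>) (rkR x)"
      using c
    proof (induction rule: rtranclp_induct)
      case base then show ?case by simp
    next
      case (step y z)
      then obtain j where j: "j < n" "int j \<noteq> rkR x" "i_adjacent FR leR rkR j y z" by blast
      have fy: "is_flag FR leR y" using R.adj_flags[OF j(3)] by blast
      have z: "z = actR (s j) y" using R.adj_act[OF j(1) j(3)] .
      have fz: "fC z = actC (s j) (fC y)" using fC_eq[OF R.s_in[OF j(1)] fy] z by simp
      have ad: "i_adjacent FC leC rkC j (fC y) (fC z)" using C.act_adj[OF j(1) fC_flag[OF fy]] fz by simp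
      have cy: "C.face (fC y) (rkR x) \<in> fC y" "rkC (C.face (fC y) (rkR x)) = rkR x"
        using C.face[OF fC_flag[OF fy] xr] by auto
      have "C.face (fC y) (rkR x) \<in> fC z" using ad cy j(2) unfolding i_adjacent_def by auto
      then have "C.face (fC z) (rkR x) = C.face (fC y) (rkR x)"
        using C.face_eq[OF C.adj_flags[OF ad, THEN conjunct2, THEN conjunct1]] cy(2) by metis
      then show ?case using step.IH by simp
    qed
    then show ?thesis unfolding \<gamma>'_def \<Psi>'_def by simp
  qed
  have img_flag: "\<gamma>' ` \<Psi> = fC \<Psi>" if f: "is_flag FR leR \<Psi>" for \<Psi>
  proof (rule equalityI; rule subsetI)
    fix z assume "z \<in> \<gamma>' ` \<Psi>"
    then obtain x where x: "x \<in> \<Psi>" "z = \<gamma>' x" by blast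
    have xr: "-1 \<le> rkR x" "rkR x \<le> int n" using R.rk_range R.flag_sub f x by blast+
    show "z \<in> fC \<Psi>" using key[OF f x(1)] x C.face[OF fC_flag[OF f] xr] by simp
  next
    fix z assume z: "z \<in> fC \<Psi>"
    have zr: "-1 \<le> rkC z" "rkC z \<le> int n" using C.rk_range C.flag_sub fC_flag[OF f] z by blast+
    define x where "x = R.face \<Psi> (rkC z)"
    have x: "x \<in> \<Psi>" "rkR x = rkC z" using R.face[OF f zr] unfolding x_def by auto
    have "\<gamma>' x = z" using key[OF f x(1)] x(2) C.face_eq[OF fC_flag[OF f] z] by simp
    then show "z \<in> \<gamma>' ` \<Psi>" using x by blast
  qed
  have "covering FR leR rkR FC leC rkC n \<gamma>'"
    unfolding covering_def
  proof (intro conjI allI impI ballI)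
    show "\<gamma>' ` FR = FC"
    proof (rule equalityI; rule subsetI)
      fix z assume "z \<in> \<gamma>' ` FR"
      then obtain x where x: "x \<in> FR" "z = \<gamma>' x" by blast
      obtain \<Psi> where f: "is_flag FR leR \<Psi>" "x \<in> \<Psi>" using R.face_in_flag[OF x(1)] by blast
      have "z \<in> fC \<Psi>" using img_flag[OF f(1)] f(2) x(2) by blast
      then show "z \<in> FC" using C.flag_sub fC_flag[OF f(1)] by blast
    next
      fix z assume z: "z \<in> FC"
      obtain \<Phi>' where f': "is_flag FC leC \<Phi>'" "z \<in> \<Phi>'" using C.face_in_flag[OF z] by blast
      obtain g where g: "g \<in> carrier G" "\<Phi>' = actC g \<Phi>C" using C.transitive[OF C_base f'(1)] by blast
      have f: "is_flag FR leR (actR g \<Psi>0)" using R.act_flag g \<Psi>0 by blast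
      have "z \<in> \<gamma>' ` (actR g \<Psi>0)" using img_flag[OF f] fC_act[OF g(1)] g f' by simp
      then show "z \<in> \<gamma>' ` FR" using R.flag_sub[OF f] by blast
    qed
  next
    fix x assume x: "x \<in> FR"
    obtain \<Psi> where f: "is_flag FR leR \<Psi>" "x \<in> \<Psi>" using R.face_in_flag[OF x] by blast
    have xr: "-1 \<le> rkR x" "rkR x \<le> int n" using R.rk_range x by auto
    show "rkC (\<gamma>' x) = rkR x" using key[OF f] C.face(2)[OF fC_flag[OF f(1)] xr] by simp
  next
    fix x y assume x: "x \<in> FR" and y: "y \<in> FR" and xy: "leR x y"
    obtain \<Psi> where f: "is_flag FR leR \<Psi>" "x \<in> \<Psi>" "y \<in> \<Psi>" using R.pair_in_flag[OF x y xy] by blast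
    have xr: "-1 \<le> rkR x" "rkR x \<le> int n" using R.rk_range x by auto
    have yr: "-1 \<le> rkR y" "rkR y \<le> int n" using R.rk_range y by auto
    have le: "rkR x \<le> rkR y" using R.rk_le[OF x y xy] .
    show "leC (\<gamma>' x) (\<gamma>' y)"
      using key[OF f(1) f(2)] key[OF f(1) f(3)] C.face[OF fC_flag[OF f(1)] xr] C.face[OF fC_flag[OF f(1)] yr]
        C.flag_le[OF fC_flag[OF f(1)]] le by simp
  next
    fix \<Phi> assume f: "is_flag FR leR \<Phi>"
    show "is_flag FC leC (\<gamma>' ` \<Phi>)" using img_flag[OF f] fC_flag[OF f] by simp
  next
    fix i \<Phi> \<Psi> assume i: "i < n" and ad: "i_adjacent FR leR rkR i \<Phi> \<Psi>"
    have f: "is_flag FR leR \<Phi>" "is_flag FR leR \<Psi>" using R.adj_flags[OF ad] by auto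
    have "\<Psi> = actR (s i) \<Phi>" using R.adj_act[OF i ad] .
    then have "fC \<Psi> = actC (s i) (fC \<Phi>)" using fC_eq[OF R.s_in[OF i] f(1)] by simp
    then show "i_adjacent FC leC rkC i (\<gamma>' ` \<Phi>) (\<gamma>' ` \<Psi>)"
      using img_flag f C.act_adj[OF i fC_flag[OF f(1)]] by simp
  qed
  then show ?thesis unfolding covers_def by blast
qed


end
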